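(* Let $K$ be an alphabet space and $\sigma:K\to K^+$ a primitive generalized substitution. For every $\mathbf z\in X_\sigma$ and every $k\in\mathbb N$, the sequence $\mathbf z$ is a concatenation of $\sigma^k$-words, and $\mathbf z=S^i\sigma^k(\mathbf y)$ for some $i\ge0$ and some $\mathbf y\in X_\sigma$.
   Context: An alphabet space is a compact zero-dimensional metric space $K$ with at least two points; $K^+$ the nonempty finite words. A generalized substitution is a map $\sigma:K\to K^+$ with $a\mapsto|\sigma(a)|$ continuous and, for each $j$, $a\mapsto$ ($j$-th letter of $\sigma(a)$) continuous on $\{a:|\sigma(a)|\ge j\}$; it is extended to words by concatenation (and iterated) and to $K^{\mathbb Z}$ by concatenating the images with the image of $x_0$ starting at coordinate $0$. $\sigma$ is primitive if for every nonempty open $V\subset K$ there is $j$ such that for all $a$ and $k\ge j$ some letter of $\sigma^k(a)$ is in $V$. $\mathcal L(\sigma)$ is the set of words that are subwords of some $\sigma^j(a)$ or limits in $K^n$ of such words; $X_\sigma=\{\mathbf y\in K^{\mathbb Z}:\mathbf y[-n,n]\in\mathcal L(\sigma)\ \forall n\ge0\}$; $S$ is the shift $S(\mathbf y)_i=y_{i+1}$. A $\sigma^k$-word is a word $\sigma^k(a)$, $a\in K$; $\mathbf z$ is a concatenation of $\sigma^k$-words if there is a strictly increasing bi-infinite sequence of integers $(m_l)_{l\in\mathbb Z}$ with each $\mathbf z[m_l,m_{l+1}-1]$ a $\sigma^k$-word. *)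

theory Defs
  imports "HOL-Analysis.Analysis" "HOL-Library.Sublist"
begin

definition alphabet_space :: "'a::metric_space set \<Rightarrow> bool" where
  "alphabet_space K \<longleftrightarrow> compact K \<and> (top_of_set K dim_le 0) \<and> (\<exists>a\<in>K. \<exists>b\<in>K. a \<noteq> b)"

definition gen_subst :: "'a::metric_space set \<Rightarrow> ('a \<Rightarrow> 'a list) \<Rightarrow> bool" where
  "gen_subst K \<sigma> \<longleftrightarrow>
     (\<forall>a\<in>K. \<sigma> a \<noteq> [] \<and> set (\<sigma> a) \<subseteq> K) \<and>
     continuous_on K (\<lambda>a. length (\<sigma> a)) \<and>
     (\<forall>j. continuous_on {a\<in>K. j < length (\<sigma> a)} (\<lambda>a. \<sigma> a ! j))"

definition subst_word :: "('a \<Rightarrow> 'a list) \<Rightarrow> 'a list \<Rightarrow> 'a list" where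
  "subst_word \<sigma> w = concat (map \<sigma> w)"

definition subst_pow :: "('a \<Rightarrow> 'a list) \<Rightarrow> nat \<Rightarrow> 'a \<Rightarrow> 'a list" where
  "subst_pow \<sigma> k a = (subst_word \<sigma> ^^ k) [a]"

definition primitive :: "'a::metric_space set \<Rightarrow> ('a \<Rightarrow> 'a list) \<Rightarrow> bool" where
  "primitive K \<sigma> \<longleftrightarrow>
     (\<forall>V. openin (top_of_set K) V \<and> V \<noteq> {} \<longrightarrow>
        (\<exists>j. \<forall>a\<in>K. \<forall>k\<ge>j. \<exists>b\<in>set (subst_pow \<sigma> k a). b \<in> V))"

definition subst_factor :: "'a set \<Rightarrow> ('a \<Rightarrow> 'a list) \<Rightarrow> 'a list \<Rightarrow> bool" where
  "subst_factor K \<sigma> w \<longleftrightarrow> (\<exists>j. \<exists>a\<in>K. sublist w (subst_pow \<sigma> j a))"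

definition lang :: "'a::metric_space set \<Rightarrow> ('a \<Rightarrow> 'a list) \<Rightarrow> 'a list set" where
  "lang K \<sigma> = {w. set w \<subseteq> K \<and>
     (subst_factor K \<sigma> w \<or>
      (\<exists>ws :: nat \<Rightarrow> 'a list. (\<forall>m. subst_factor K \<sigma> (ws m) \<and> length (ws m) = length w) \<and>
          (\<forall>i<length w. (\<lambda>m. ws m ! i) \<longlonglongrightarrow> w ! i)))}"

definition window :: "(int \<Rightarrow> 'a) \<Rightarrow> int \<Rightarrow> int \<Rightarrow> 'a list" where
  "window y a b = map y [a..b]"

definition subshift :: "'a::metric_space set \<Rightarrow> ('a \<Rightarrow> 'a list) \<Rightarrow> (int \<Rightarrow> 'a) set" where
  "subshift K \<sigma> = {y. \<forall>n::nat. window y (- int n) (int n) \<in> lang K \<sigma>}"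

definition shift :: "(int \<Rightarrow> 'a) \<Rightarrow> int \<Rightarrow> 'a" where
  "shift y = (\<lambda>i. y (i + 1))"

text \<open>Extension of a letter-to-word map \<tau> to bi-infinite sequences: the image of y_0 starts at
  coordinate 0.  block_start gives the position where \<tau>(y_m) starts.\<close>
definition block_start :: "('a \<Rightarrow> 'a list) \<Rightarrow> (int \<Rightarrow> 'a) \<Rightarrow> int \<Rightarrow> int" where
  "block_start \<tau> y m =
     (if 0 \<le> m then (\<Sum>l\<in>{0..<m}. int (length (\<tau> (y l))))
      else - (\<Sum>l\<in>{m..<0}. int (length (\<tau> (y l)))))"

definition seq_subst :: "('a \<Rightarrow> 'a list) \<Rightarrow> (int \<Rightarrow> 'a) \<Rightarrow> int \<Rightarrow> 'a" where
  "seq_subst \<tau> y i =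
     (let m = (THE m. block_start \<tau> y m \<le> i \<and> i < block_start \<tau> y (m + 1))
      in \<tau> (y m) ! nat (i - block_start \<tau> y m))"

definition concat_of_words :: "'a set \<Rightarrow> ('a \<Rightarrow> 'a list) \<Rightarrow> nat \<Rightarrow> (int \<Rightarrow> 'a) \<Rightarrow> bool" where
  "concat_of_words K \<sigma> k z \<longleftrightarrow>
     (\<exists>m :: int \<Rightarrow> int. strict_mono m \<and>
        (\<forall>l. \<exists>a\<in>K. window z (m l) (m (l + 1) - 1) = subst_pow \<sigma> k a))"

end

theory Submission
  imports Defs
begin


lemma subst_word_append: "subst_word \<sigma> (xs @ ys) = subst_word \<sigma> xs @ subst_word \<sigma> ys"
  by (simp add: subst_word_def)

lemma funpow_subst_append: "(subst_word \<sigma> ^^ k) (xs @ ys) = (subst_word \<sigma> ^^ k) xs @ (subst_word \<sigma> ^^ k) ys"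
  by (induction k) (simp_all add: subst_word_append)

lemma funpow_subst_word: "(subst_word \<sigma> ^^ k) w = concat (map (subst_pow \<sigma> k) w)"
proof (induction w)
  case Nil
  have "(subst_word \<sigma> ^^ k) [] = []" by (induction k) (simp_all add: subst_word_def)
  then show ?case by simp
next
  case (Cons a w)
  have "(subst_word \<sigma> ^^ k) (a # w) = (subst_word \<sigma> ^^ k) [a] @ (subst_word \<sigma> ^^ k) w"
    using funpow_subst_append[where \<sigma>=\<sigma> and k=k and xs="[a]" and ys=w] by simp
  then show ?case using Cons by (simp add: subst_pow_def)
qed

lemma subst_pow_0[simp]: "subst_pow \<sigma> 0 a = [a]"
  by (simp add: subst_pow_def)

lemma subst_pow_add: "subst_pow \<sigma> (m + n) a = concat (map (subst_pow \<sigma> n) (subst_pow \<sigma> m a))"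
proof -
  have "subst_pow \<sigma> (m + n) a = (subst_word \<sigma> ^^ n) ((subst_word \<sigma> ^^ m) [a])"
    unfolding subst_pow_def by (simp only: add.commute[of m n] funpow_add comp_apply)
  moreover have "(subst_word \<sigma> ^^ n) ((subst_word \<sigma> ^^ m) [a]) = concat (map (subst_pow \<sigma> n) ((subst_word \<sigma> ^^ m) [a]))"
    by (rule funpow_subst_word)
  moreover have "(subst_word \<sigma> ^^ m) [a] = subst_pow \<sigma> m a" by (simp add: subst_pow_def)
  ultimately show ?thesis by simp
qed

lemma subst_pow_1[simp]: "subst_pow \<sigma> (Suc 0) a = \<sigma> a"
  by (simp add: subst_pow_def subst_word_def)

lemma subst_pow_Suc: "subst_pow \<sigma> (Suc k) a = concat (map \<sigma> (subst_pow \<sigma> k a))"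
proof -
  have e: "subst_pow \<sigma> (Suc 0) = \<sigma>" by (rule ext) simp
  show ?thesis using subst_pow_add[of \<sigma> k "Suc 0" a] by (simp add: e)
qed

lemma subst_pow_K:
  assumes "gen_subst K \<sigma>" "a \<in> K"
  shows "subst_pow \<sigma> k a \<noteq> [] \<and> set (subst_pow \<sigma> k a) \<subseteq> K"
proof (induction k)
  case 0 then show ?case using assms by simp
next
  case (Suc k)
  then obtain b w where bw: "subst_pow \<sigma> k a = b # w" by (cases "subst_pow \<sigma> k a") auto
  have bK: "b \<in> K" using Suc bw by auto
  have "\<sigma> b \<noteq> []" using assms(1) bK by (simp add: gen_subst_def)
  moreover have "set (concat (map \<sigma> (subst_pow \<sigma> k a))) \<subseteq> K"
    using Suc assms(1) by (auto simp: gen_subst_def)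
  ultimately show ?case by (simp add: subst_pow_Suc bw)
qed

definition wconv :: "(nat \<Rightarrow> 'a::topological_space list) \<Rightarrow> 'a list \<Rightarrow> bool" where
  "wconv ws w \<longleftrightarrow> eventually (\<lambda>n. length (ws n) = length w) sequentially \<and>
     (\<forall>i<length w. (\<lambda>n. ws n ! i) \<longlonglongrightarrow> w ! i)"

lemma wconv_Nil: "wconv ws [] \<longleftrightarrow> eventually (\<lambda>n. ws n = []) sequentially"
  by (simp add: wconv_def)

lemma wconv_cong:
  assumes "wconv ws w" "eventually (\<lambda>n. ws n = vs n) sequentially"
  shows "wconv vs w"
proof -
  have "eventually (\<lambda>n. length (ws n) = length w) sequentially"
    using assms(1) unfolding wconv_def by simp
  then have "eventually (\<lambda>n. length (vs n) = length w) sequentially"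
    using assms(2) by eventually_elim auto
  moreover have "(\<lambda>n. vs n ! i) \<longlonglongrightarrow> w ! i" if "i < length w" for i
  proof -
    have "(\<lambda>n. ws n ! i) \<longlonglongrightarrow> w ! i" using assms that by (simp add: wconv_def)
    moreover have "eventually (\<lambda>n. ws n ! i = vs n ! i) sequentially"
      using assms(2) by eventually_elim auto
    ultimately show ?thesis using Lim_transform_eventually by fastforce
  qed
  ultimately show ?thesis by (simp add: wconv_def)
qed

lemma wconv_append:
  assumes "wconv xs u" "wconv ys v"
  shows "wconv (\<lambda>n. xs n @ ys n) (u @ v)"
proof -
  have ev: "eventually (\<lambda>n. length (xs n) = length u \<and> length (ys n) = length v) sequentially"
    using assms unfolding wconv_def by (simp add: eventually_conj_iff)
  have "(\<lambda>n. (xs n @ ys n) ! i) \<longlonglongrightarrow> (u @ v) ! i" if "i < length u + length v" for i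
  proof (cases "i < length u")
    case True
    have "(\<lambda>n. xs n ! i) \<longlonglongrightarrow> u ! i" using assms True by (simp add: wconv_def)
    moreover have "eventually (\<lambda>n. xs n ! i = (xs n @ ys n) ! i) sequentially"
      using ev by eventually_elim (simp add: nth_append True)
    ultimately show ?thesis using True Lim_transform_eventually by (fastforce simp: nth_append)
  next
    case False
    have "(\<lambda>n. ys n ! (i - length u)) \<longlonglongrightarrow> v ! (i - length u)" using assms False that by (simp add: wconv_def)
    moreover have "eventually (\<lambda>n. ys n ! (i - length u) = (xs n @ ys n) ! i) sequentially"
      using ev by eventually_elim (simp add: nth_append False)
    ultimately show ?thesis using False Lim_transform_eventually by (fastforce simp: nth_append)
  qed
  moreover have "eventually (\<lambda>n. length (xs n @ ys n) = length (u @ v)) sequentially"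
    using ev by eventually_elim simp
  ultimately show ?thesis by (simp add: wconv_def)
qed

lemma wconv_take_drop:
  assumes "wconv ws w"
  shows "wconv (\<lambda>n. take l (drop p (ws n))) (take l (drop p w))"
proof -
  have ev: "eventually (\<lambda>n. length (ws n) = length w) sequentially"
    using assms unfolding wconv_def by simp
  have "(\<lambda>n. take l (drop p (ws n)) ! i) \<longlonglongrightarrow> take l (drop p w) ! i" if "i < length (take l (drop p w))" for i
  proof -
    have "p + i < length w" using that by auto
    then have "(\<lambda>n. ws n ! (p + i)) \<longlonglongrightarrow> w ! (p + i)" using assms by (simp add: wconv_def)
    moreover have "eventually (\<lambda>n. ws n ! (p + i) = take l (drop p (ws n)) ! i) sequentially"
      using ev by eventually_elim (use that in \<open>auto simp: nth_drop\<close>)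
    ultimately show ?thesis using that Lim_transform_eventually by fastforce
  qed
  moreover have "eventually (\<lambda>n. length (take l (drop p (ws n))) = length (take l (drop p w))) sequentially"
    using ev by eventually_elim simp
  ultimately show ?thesis by (simp add: wconv_def)
qed

lemma nat_tendsto_eventually:
  fixes f :: "nat \<Rightarrow> nat"
  assumes "f \<longlonglongrightarrow> c"
  shows "eventually (\<lambda>n. f n = c) sequentially"
proof -
  have "eventually (\<lambda>n. f n \<in> {c}) sequentially"
    using topological_tendstoD[OF assms, of "{c}"] by (simp add: open_discrete)
  then show ?thesis by simp
qed

lemma gen_subst_wconv:
  assumes gs: "gen_subst K \<sigma>" and x: "\<And>n. x n \<in> K" and a: "a \<in> K" and lim: "x \<longlonglongrightarrow> a"
  shows "wconv (\<lambda>n. \<sigma> (x n)) (\<sigma> a)"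
proof -
  have "continuous_on K (\<lambda>a. length (\<sigma> a))" using gs by (simp add: gen_subst_def)
  then have "(\<lambda>n. length (\<sigma> (x n))) \<longlonglongrightarrow> length (\<sigma> a)"
    using continuous_on_sequentially[of K "\<lambda>a. length (\<sigma> a)"] x a lim by (auto simp: o_def)
  then have ev: "eventually (\<lambda>n. length (\<sigma> (x n)) = length (\<sigma> a)) sequentially"
    by (rule nat_tendsto_eventually)
  have "(\<lambda>n. \<sigma> (x n) ! j) \<longlonglongrightarrow> \<sigma> a ! j" if j: "j < length (\<sigma> a)" for j
  proof -
    define S where "S = {b\<in>K. j < length (\<sigma> b)}"
    define x' where "x' n = (if x n \<in> S then x n else a)" for n
    have aS: "a \<in> S" using a j by (simp add: S_def)
    have ev2: "eventually (\<lambda>n. x' n = x n) sequentially"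
      using ev by eventually_elim (use j x in \<open>simp add: x'_def S_def\<close>)
    have "x' \<longlonglongrightarrow> a"
      using Lim_transform_eventually[OF lim] ev2 by (metis (mono_tags, lifting) eventually_mono)
    moreover have "\<And>n. x' n \<in> S" using aS by (simp add: x'_def)
    moreover have "continuous_on S (\<lambda>b. \<sigma> b ! j)" using gs by (simp add: gen_subst_def S_def)
    ultimately have "(\<lambda>n. \<sigma> (x' n) ! j) \<longlonglongrightarrow> \<sigma> a ! j"
      using continuous_on_sequentially[of S "\<lambda>b. \<sigma> b ! j"] aS by (auto simp: o_def)
    moreover have "eventually (\<lambda>n. \<sigma> (x' n) ! j = \<sigma> (x n) ! j) sequentially"
      using ev2 by eventually_elim simp
    ultimately show ?thesis using Lim_transform_eventually by fastforce
  qed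
  with ev show ?thesis by (simp add: wconv_def)
qed



lemma wconv_concat:
  assumes gs: "gen_subst K \<sigma>"
  shows "wconv ws w \<Longrightarrow> (\<And>n. set (ws n) \<subseteq> K) \<Longrightarrow> set w \<subseteq> K \<Longrightarrow>
    wconv (\<lambda>n. concat (map \<sigma> (ws n))) (concat (map \<sigma> w))"
proof (induction w arbitrary: ws)
  case Nil
  then have "eventually (\<lambda>n. ws n = []) sequentially" by (simp add: wconv_Nil)
  then have "eventually (\<lambda>n. concat (map \<sigma> (ws n)) = []) sequentially"
    by eventually_elim simp
  then show ?case by (simp add: wconv_Nil)
next
  case (Cons a w)
  define x where "x n = (if ws n = [] then a else hd (ws n))" for n
  define vs where "vs n = take (length w) (drop 1 (ws n))" for n
  have ev: "eventually (\<lambda>n. length (ws n) = Suc (length w)) sequentially"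
    using Cons.prems(1) by (simp add: wconv_def)
  have aK: "a \<in> K" and wK: "set w \<subseteq> K" using Cons.prems(3) by auto
  have xK: "x n \<in> K" for n
    using Cons.prems(2)[of n] aK by (cases "ws n") (auto simp: x_def)
  have "(\<lambda>n. ws n ! 0) \<longlonglongrightarrow> a" using Cons.prems(1) by (auto simp: wconv_def)
  moreover have "eventually (\<lambda>n. ws n ! 0 = x n) sequentially"
    using ev by eventually_elim (auto simp: x_def hd_conv_nth)
  ultimately have "x \<longlonglongrightarrow> a" using Lim_transform_eventually by fastforce
  then have c1: "wconv (\<lambda>n. \<sigma> (x n)) (\<sigma> a)" using gen_subst_wconv[OF gs xK aK] by simp
  have "wconv vs (take (length w) (drop 1 (a # w)))"
    unfolding vs_def by (rule wconv_take_drop[OF Cons.prems(1)])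
  then have "wconv vs w" by simp
  moreover have "set (vs n) \<subseteq> K" for n
    using Cons.prems(2)[of n] unfolding vs_def by (meson order.trans set_drop_subset set_take_subset)
  ultimately have c2: "wconv (\<lambda>n. concat (map \<sigma> (vs n))) (concat (map \<sigma> w))"
    using Cons.IH wK by blast
  have "wconv (\<lambda>n. \<sigma> (x n) @ concat (map \<sigma> (vs n))) (\<sigma> a @ concat (map \<sigma> w))"
    by (rule wconv_append[OF c1 c2])
  moreover have "eventually (\<lambda>n. \<sigma> (x n) @ concat (map \<sigma> (vs n)) = concat (map \<sigma> (ws n))) sequentially"
    using ev
  proof eventually_elim
    case (elim n)
    then obtain b u where "ws n = b # u" by (cases "ws n") auto
    with elim show ?case by (simp add: x_def vs_def)
  qed
  ultimately show ?case using wconv_cong by fastforce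
qed

lemma subst_pow_wconv:
  assumes gs: "gen_subst K \<sigma>" and x: "\<And>n. x n \<in> K" and a: "a \<in> K" and lim: "x \<longlonglongrightarrow> a"
  shows "wconv (\<lambda>n. subst_pow \<sigma> k (x n)) (subst_pow \<sigma> k a)"
proof (induction k)
  case 0
  then show ?case using lim by (simp add: wconv_def)
next
  case (Suc k)
  show ?case unfolding subst_pow_Suc
    by (rule wconv_concat[OF gs Suc]) (use subst_pow_K[OF gs] x a in auto)
qed

lemma sublist_take_drop:
  "sublist w v \<longleftrightarrow> (\<exists>p. p + length w \<le> length v \<and> w = take (length w) (drop p v))"
proof
  assume "sublist w v"
  then obtain ps ss where "v = ps @ w @ ss" by (auto simp: sublist_def)
  then show "\<exists>p. p + length w \<le> length v \<and> w = take (length w) (drop p v)"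
    by (intro exI[of _ "length ps"]) simp
next
  assume "\<exists>p. p + length w \<le> length v \<and> w = take (length w) (drop p v)"
  then obtain p where "w = take (length w) (drop p v)" by blast
  then have "v = take p v @ w @ drop (length w) (drop p v)"
    by (metis append_take_drop_id)
  then show "sublist w v" by (auto simp: sublist_def)
qed

lemma sublist_concat: "x \<in> set xs \<Longrightarrow> sublist x (concat xs)"
proof -
  assume "x \<in> set xs"
  then obtain ys zs where "xs = ys @ x # zs" by (meson split_list)
  then show ?thesis by (auto simp: sublist_def)
qed



lemma sublist_trans: "sublist a b \<Longrightarrow> sublist b c \<Longrightarrow> sublist a c"
  by (rule sublist_order.order_trans)

lemma sublist_take_drop2: "sublist (take l (drop p v)) v"
  using sublist_trans[OF sublist_take sublist_drop] by blast

lemma approx_Fk: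
  assumes gs: "gen_subst K \<sigma>" and prim: "primitive K \<sigma>" and b0: "b0 \<in> K"
    and fac: "subst_factor K \<sigma> w" and e: "e > 0"
  shows "\<exists>f. (\<exists>j\<ge>k. \<exists>b\<in>K. sublist f (subst_pow \<sigma> j b)) \<and> length f = length w \<and>
             (\<forall>i<length w. dist (f ! i) (w ! i) < e)"
proof -
  obtain j a where aK: "a \<in> K" and sw: "sublist w (subst_pow \<sigma> j a)"
    using fac by (auto simp: subst_factor_def)
  then obtain p where p: "w = take (length w) (drop p (subst_pow \<sigma> j a))"
    by (auto simp: sublist_take_drop)
  define V where "V n = K \<inter> ball a (1 / real (Suc n))" for n
  have "\<exists>c J. J \<ge> k \<and> c \<in> set (subst_pow \<sigma> J b0) \<and> c \<in> V n" for n
  proof -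
    have "openin (top_of_set K) (V n)" unfolding V_def by (rule openin_open_Int) simp
    moreover have "V n \<noteq> {}" using aK by (auto simp: V_def)
    ultimately obtain J where "\<forall>a\<in>K. \<forall>k'\<ge>J. \<exists>b\<in>set (subst_pow \<sigma> k' a). b \<in> V n"
      using prim unfolding primitive_def by blast
    then obtain c where "c \<in> set (subst_pow \<sigma> (max J k) b0)" "c \<in> V n"
      using b0 by (meson max.cobounded1)
    then show ?thesis by (intro exI[of _ c] exI[of _ "max J k"]) auto
  qed
  then obtain x J where xJ: "\<And>n. J n \<ge> k \<and> x n \<in> set (subst_pow \<sigma> (J n) b0) \<and> x n \<in> V n"
    by metis
  have xK: "x n \<in> K" for n using xJ[of n] by (auto simp: V_def)
  have "x \<longlonglongrightarrow> a"
    unfolding lim_sequentially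
  proof (intro allI impI)
    fix r :: real assume "r > 0"
    then obtain N where N: "inverse (real (Suc N)) < r" using reals_Archimedean by blast
    have "dist (x n) a < r" if "n \<ge> N" for n
    proof -
      have "dist a (x n) < 1 / real (Suc n)" using xJ[of n] by (auto simp: V_def)
      also have "\<dots> \<le> inverse (real (Suc N))" using that by (simp add: divide_simps)
      finally show ?thesis using N by (simp add: dist_commute)
    qed
    then show "\<exists>no. \<forall>n\<ge>no. dist (x n) a < r" by blast
  qed
  then have "wconv (\<lambda>n. subst_pow \<sigma> j (x n)) (subst_pow \<sigma> j a)"
    using subst_pow_wconv[where x=x, OF gs xK aK] by blast
  then have wc: "wconv (\<lambda>n. take (length w) (drop p (subst_pow \<sigma> j (x n)))) w"
    using wconv_take_drop[of _ _ "length w" p] p by metis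
  define g where "g n = take (length w) (drop p (subst_pow \<sigma> j (x n)))" for n
  have ev1: "eventually (\<lambda>n. length (g n) = length w) sequentially"
    using wc by (simp add: wconv_def g_def)
  have "\<forall>i\<in>{..<length w}. eventually (\<lambda>n. dist (g n ! i) (w ! i) < e) sequentially"
  proof
    fix i assume "i \<in> {..<length w}"
    then have "(\<lambda>n. g n ! i) \<longlonglongrightarrow> w ! i" using wc by (simp add: wconv_def g_def)
    then show "eventually (\<lambda>n. dist (g n ! i) (w ! i) < e) sequentially"
      using e by (simp add: tendsto_iff)
  qed
  then have ev2: "eventually (\<lambda>n. \<forall>i\<in>{..<length w}. dist (g n ! i) (w ! i) < e) sequentially"
    by (intro eventually_ball_finite) auto
  from eventually_conj[OF ev1 ev2] obtain n where
    n: "length (g n) = length w" "\<forall>i\<in>{..<length w}. dist (g n ! i) (w ! i) < e"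
    unfolding eventually_sequentially by blast
  have "sublist (g n) (subst_pow \<sigma> j (x n))" unfolding g_def by (rule sublist_take_drop2)
  moreover have "sublist (subst_pow \<sigma> j (x n)) (subst_pow \<sigma> (J n + j) b0)"
    unfolding subst_pow_add by (rule sublist_concat) (use xJ[of n] in auto)
  ultimately have "sublist (g n) (subst_pow \<sigma> (J n + j) b0)" by (rule sublist_trans)
  moreover have "J n + j \<ge> k" using xJ[of n] by simp
  ultimately show ?thesis using n b0 by (intro exI[of _ "g n"]) blast
qed



lemma bs_0[simp]: "block_start \<tau> y 0 = 0"
  by (simp add: block_start_def)

lemma bs_succ: "block_start \<tau> y (m + 1) = block_start \<tau> y m + int (length (\<tau> (y m)))"
proof (cases "m \<ge> 0")
  case True
  have "{0..<m + 1} = insert m {0..<m}" using True by auto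
  then show ?thesis using True by (simp add: block_start_def)
next
  case False
  show ?thesis
  proof (cases "m = -1")
    case True
    have "{-1..<0::int} = {-1}" by auto
    then show ?thesis using True by (simp add: block_start_def)
  next
    case False2: False
    have "{m..<0} = insert m {m+1..<0}" using False by auto
    then show ?thesis using False False2 by (simp add: block_start_def)
  qed
qed

lemma bs_less_step:
  assumes ne: "\<forall>l. \<tau> (y l) \<noteq> []"
  shows "block_start \<tau> y m < block_start \<tau> y (m + 1)"
  using ne[rule_format, of m] by (simp add: bs_succ)

lemma bs_strict_mono:
  assumes ne: "\<forall>l. \<tau> (y l) \<noteq> []"
  shows "strict_mono (block_start \<tau> y)"
proof (rule strict_monoI)
  fix m m' :: int assume "m < m'"
  then have "m + 1 \<le> m'" by simp
  then show "block_start \<tau> y m < block_start \<tau> y m'"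
  proof (induction m' rule: int_ge_induct)
    case base then show ?case using bs_less_step[OF ne] by simp
  next
    case (step i) then show ?case using bs_less_step[OF ne, of i] by simp
  qed
qed

lemma bs_mono_le:
  assumes ne: "\<forall>l. \<tau> (y l) \<noteq> []" and "m \<le> m'"
  shows "block_start \<tau> y m \<le> block_start \<tau> y m'"
  using bs_strict_mono[OF ne] assms(2) by (metis order_le_less strict_mono_less)

lemma bs_cover:
  assumes ne: "\<forall>l. \<tau> (y l) \<noteq> []"
  shows "\<exists>m. block_start \<tau> y m \<le> Q \<and> Q < block_start \<tau> y (m + 1)"
proof (induction Q rule: int_induct[where k=0])
  case base
  then show ?case using bs_less_step[OF ne, of 0] by (intro exI[of _ 0]) simp
next
  case (step1 i)
  then obtain m where m: "block_start \<tau> y m \<le> i" "i < block_start \<tau> y (m + 1)" by blast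
  show ?case
  proof (cases "i + 1 < block_start \<tau> y (m + 1)")
    case True then show ?thesis using m by (intro exI[of _ m]) simp
  next
    case False
    then have "i + 1 = block_start \<tau> y (m + 1)" using m by simp
    then show ?thesis using bs_less_step[OF ne, of "m + 1"] by (intro exI[of _ "m + 1"]) simp
  qed
next
  case (step2 i)
  then obtain m where m: "block_start \<tau> y m \<le> i" "i < block_start \<tau> y (m + 1)" by blast
  show ?case
  proof (cases "block_start \<tau> y m \<le> i - 1")
    case True then show ?thesis using m by (intro exI[of _ m]) simp
  next
    case False
    then have "i = block_start \<tau> y m" using m by simp
    then show ?thesis using bs_less_step[OF ne, of "m - 1"] by (intro exI[of _ "m - 1"]) simp
  qed
qed

lemma bs_unique:
  assumes ne: "\<forall>l. \<tau> (y l) \<noteq> []"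
    and "block_start \<tau> y m \<le> Q" "Q < block_start \<tau> y (m + 1)"
    and "block_start \<tau> y m' \<le> Q" "Q < block_start \<tau> y (m' + 1)"
  shows "m' = m"
proof (rule ccontr)
  assume "m' \<noteq> m"
  then consider "m' + 1 \<le> m" | "m + 1 \<le> m'" by linarith
  then show False
  proof cases
    case 1 then show ?thesis using bs_mono_le[OF ne 1] assms by simp
  next
    case 2 then show ?thesis using bs_mono_le[OF ne 2] assms by simp
  qed
qed

lemma seq_subst_bs:
  assumes ne: "\<forall>l. \<tau> (y l) \<noteq> []" and r: "r < length (\<tau> (y m))"
  shows "seq_subst \<tau> y (block_start \<tau> y m + int r) = \<tau> (y m) ! r"
proof -
  let ?Q = "block_start \<tau> y m + int r"
  have h: "block_start \<tau> y m \<le> ?Q \<and> ?Q < block_start \<tau> y (m + 1)"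
    using r by (simp add: bs_succ)
  have "(THE m'. block_start \<tau> y m' \<le> ?Q \<and> ?Q < block_start \<tau> y (m' + 1)) = m"
  proof (rule the_equality)
    show "block_start \<tau> y m \<le> ?Q \<and> ?Q < block_start \<tau> y (m + 1)" by (rule h)
  next
    fix m' assume "block_start \<tau> y m' \<le> ?Q \<and> ?Q < block_start \<tau> y (m' + 1)"
    then show "m' = m" using bs_unique[OF ne] h by blast
  qed
  then show ?thesis by (simp add: seq_subst_def)
qed

lemma length_window[simp]: "length (window x a b) = nat (b - a + 1)"
  by (simp add: window_def)

lemma nth_window: "i < nat (b - a + 1) \<Longrightarrow> window x a b ! i = x (a + int i)"
  by (simp add: window_def)

lemma window_shift: "window (\<lambda>t. x (t + c)) a b = window x (a + c) (b + c)"
  by (rule nth_equalityI) (auto simp: nth_window algebra_simps)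

lemma shift_pow: "(shift ^^ i) x = (\<lambda>t. x (t + int i))"
  by (induction i arbitrary: x) (auto simp: shift_def algebra_simps)

lemma window_block:
  assumes ne: "\<forall>l. \<tau> (y l) \<noteq> []"
  shows "window (seq_subst \<tau> y) (block_start \<tau> y m) (block_start \<tau> y (m + 1) - 1) = \<tau> (y m)"
proof (rule nth_equalityI)
  show "length (window (seq_subst \<tau> y) (block_start \<tau> y m) (block_start \<tau> y (m + 1) - 1)) = length (\<tau> (y m))"
    by (simp add: bs_succ)
  fix i assume "i < length (window (seq_subst \<tau> y) (block_start \<tau> y m) (block_start \<tau> y (m + 1) - 1))"
  then have i: "i < length (\<tau> (y m))" by (simp add: bs_succ)
  then show "window (seq_subst \<tau> y) (block_start \<tau> y m) (block_start \<tau> y (m + 1) - 1) ! i = \<tau> (y m) ! i"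
    by (simp add: nth_window bs_succ seq_subst_bs[OF ne])
qed

lemma window_split:
  assumes "p \<le> q" "q \<le> r + 1"
  shows "window x p r = window x p (q - 1) @ window x q r"
proof (cases "q \<le> r")
  case True then show ?thesis using assms upto_split1[of p q r] by (simp add: window_def)
next
  case False
  then have "q = r + 1" using assms by simp
  then show ?thesis by (simp add: window_def)
qed

lemma window_blocks:
  assumes ne: "\<forall>l. \<tau> (y l) \<noteq> []" and ae: "a \<le> e"
  shows "window (seq_subst \<tau> y) (block_start \<tau> y a) (block_start \<tau> y e - 1) = concat (map \<tau> (window y a (e - 1)))"
  using ae
proof (induction e rule: int_ge_induct)
  case base
  then show ?case by (simp add: window_def)
next
  case (step e)
  have le1: "block_start \<tau> y a \<le> block_start \<tau> y e" using bs_mono_le[OF ne step(1)] .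
  have le2: "block_start \<tau> y e \<le> block_start \<tau> y (e + 1) - 1 + 1" using bs_less_step[OF ne, of e] by simp
  have "window (seq_subst \<tau> y) (block_start \<tau> y a) (block_start \<tau> y (e + 1) - 1)
      = window (seq_subst \<tau> y) (block_start \<tau> y a) (block_start \<tau> y e - 1) @
        window (seq_subst \<tau> y) (block_start \<tau> y e) (block_start \<tau> y (e + 1) - 1)"
    by (rule window_split[OF le1 le2])
  also have "\<dots> = concat (map \<tau> (window y a (e - 1))) @ \<tau> (y e)"
    using step(2) window_block[OF ne] by simp
  also have "\<dots> = concat (map \<tau> (window y a e))"
    using window_split[of a e "e" y] step(1) by (simp add: window_def)
  finally show ?case by simp
qed



lemma lang_approx:
  assumes gs: "gen_subst K \<sigma>" and prim: "primitive K \<sigma>" and b0: "b0 \<in> K"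
    and w: "w \<in> lang K \<sigma>" and e: "e > 0"
  shows "\<exists>f. (\<exists>j\<ge>k. \<exists>b\<in>K. sublist f (subst_pow \<sigma> j b)) \<and> length f = length w \<and>
             (\<forall>i<length w. dist (f ! i) (w ! i) < e)"
proof -
  have "subst_factor K \<sigma> w \<or>
      (\<exists>ws :: nat \<Rightarrow> _ list. (\<forall>m. subst_factor K \<sigma> (ws m) \<and> length (ws m) = length w) \<and>
          (\<forall>i<length w. (\<lambda>m. ws m ! i) \<longlonglongrightarrow> w ! i))"
    using w by (simp add: lang_def)
  then show ?thesis
  proof
    assume "subst_factor K \<sigma> w"
    then show ?thesis using approx_Fk[OF gs prim b0 _ e] by blast
  next
    assume "\<exists>ws :: nat \<Rightarrow> _ list. (\<forall>m. subst_factor K \<sigma> (ws m) \<and> length (ws m) = length w) \<and>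
          (\<forall>i<length w. (\<lambda>m. ws m ! i) \<longlonglongrightarrow> w ! i)"
    then obtain ws :: "nat \<Rightarrow> _ list" where ws: "\<forall>m. subst_factor K \<sigma> (ws m) \<and> length (ws m) = length w"
      "\<forall>i<length w. (\<lambda>m. ws m ! i) \<longlonglongrightarrow> w ! i" by blast
    have e2: "e / 2 > 0" using e by simp
    have "\<forall>i\<in>{..<length w}. eventually (\<lambda>m. dist (ws m ! i) (w ! i) < e / 2) sequentially"
    proof
      fix i assume "i \<in> {..<length w}"
      then have lim: "(\<lambda>m. ws m ! i) \<longlonglongrightarrow> w ! i" using ws(2) by simp
      show "eventually (\<lambda>m. dist (ws m ! i) (w ! i) < e / 2) sequentially"
        using tendsto_iff[THEN iffD1, OF lim, rule_format, OF e2] .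
    qed
    then have "eventually (\<lambda>m. \<forall>i\<in>{..<length w}. dist (ws m ! i) (w ! i) < e / 2) sequentially"
      by (intro eventually_ball_finite) auto
    then obtain m where m: "\<forall>i\<in>{..<length w}. dist (ws m ! i) (w ! i) < e / 2"
      unfolding eventually_sequentially by blast
    obtain f where f: "\<exists>j\<ge>k. \<exists>b\<in>K. sublist f (subst_pow \<sigma> j b)" "length f = length (ws m)"
      "\<forall>i<length (ws m). dist (f ! i) (ws m ! i) < e / 2"
      using approx_Fk[OF gs prim b0 _ e2, of "ws m" k] ws(1) by blast
    have "dist (f ! i) (w ! i) < e" if "i < length w" for i
    proof -
      have "dist (f ! i) (w ! i) \<le> dist (f ! i) (ws m ! i) + dist (ws m ! i) (w ! i)"
        by (rule dist_triangle)
      also have "\<dots> < e / 2 + e / 2" using f(3) m ws(1) that by (intro add_strict_mono) auto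
      finally show ?thesis by simp
    qed
    then show ?thesis using f ws(1) by (intro exI[of _ f]) auto
  qed
qed

lemma length_concat_map:
  "length (concat (map \<tau> u)) = (\<Sum>l=0..<length u. length (\<tau> (u ! l)))"
  by (simp add: length_concat sum_list_sum_nth)

lemma desubst_n:
  assumes gs: "gen_subst K \<sigma>" and prim: "primitive K \<sigma>" and b0: "b0 \<in> K"
    and z: "z \<in> subshift K \<sigma>" and Mb: "\<forall>a\<in>K. length (subst_pow \<sigma> k a) \<le> M"
  shows "\<exists>yn r. (\<forall>l. yn l \<in> K) \<and> r < length (subst_pow \<sigma> k (yn 0)) \<and>
    (\<forall>t. - int n \<le> t \<and> t \<le> int n \<longrightarrow>
        dist (z t) (seq_subst (subst_pow \<sigma> k) yn (t + int r)) < 2 / real (Suc n)) \<and>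
    (\<forall>N. (N + 1) * M \<le> n \<longrightarrow> subst_factor K \<sigma> (window yn (- int N) (int N)))"
proof -
  define \<tau> where "\<tau> = subst_pow \<sigma> k"
  define w0 where "w0 = window z (- int n) (int n)"
  have w0L: "w0 \<in> lang K \<sigma>" using z by (simp add: subshift_def w0_def)
  have lw0: "length w0 = 2 * n + 1" by (simp add: w0_def nat_add_distrib)
  obtain f j b where jk: "j \<ge> k" and bK: "b \<in> K" and fsub: "sublist f (subst_pow \<sigma> j b)"
    and lf: "length f = 2 * n + 1" and fd: "\<forall>i<2 * n + 1. dist (f ! i) (w0 ! i) < 2 / real (Suc n)"
    using lang_approx[OF gs prim b0 w0L, of "2 / real (Suc n)" k] lw0 by auto
  define u where "u = subst_pow \<sigma> (j - k) b"
  define C where "C = concat (map \<tau> u)"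
  have uK: "set u \<subseteq> K" and une: "u \<noteq> []" using subst_pow_K[OF gs bK] by (auto simp: u_def)
  have C: "subst_pow \<sigma> j b = C"
    using subst_pow_add[of \<sigma> "j - k" k b] jk by (simp add: C_def u_def \<tau>_def)
  obtain p where p: "p + length f \<le> length C" "f = take (length f) (drop p C)"
    using fsub C by (auto simp: sublist_take_drop)
  define L where "L = length u"
  define S where "S c = (\<Sum>l=0..<c. length (\<tau> (u ! l)))" for c
  have TL: "length C = S L" by (simp add: C_def S_def L_def length_concat_map)
  have S_Suc: "S (Suc c) = S c + length (\<tau> (u ! c))" for c by (simp add: S_def)
  have S0: "S 0 = 0" by (simp add: S_def)
  define P where "P = p + n"
  have PT: "P < S L" using p lf TL by (simp add: P_def)
  define c0 where "c0 = (LEAST c. P < S c)"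
  have c0a: "P < S c0" unfolding c0_def by (rule LeastI[of _ L]) (rule PT)
  have c0L: "c0 \<le> L" unfolding c0_def by (rule Least_le) (rule PT)
  have c0pos: "c0 > 0" using c0a S0 by (cases c0) auto
  define c where "c = c0 - 1"
  have c0c: "c0 = Suc c" using c0pos by (simp add: c_def)
  have cL: "c < L" using c0L c0c by simp
  have Sc: "S c \<le> P"
  proof (rule ccontr)
    assume "\<not> S c \<le> P"
    then have "P < S c" by simp
    then have "c0 \<le> c" unfolding c0_def by (rule Least_le)
    then show False using c0c by simp
  qed
  have SSc: "P < S c + length (\<tau> (u ! c))" using c0a c0c S_Suc by simp
  define r where "r = P - S c"
  have rlt: "r < length (\<tau> (u ! c))" using Sc SSc by (simp add: r_def)
  define yn where "yn l = (if 0 \<le> int c + l \<and> int c + l < int L then u ! nat (int c + l) else b0)" for l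
  have ynK: "\<forall>l. yn l \<in> K"
  proof
    fix l show "yn l \<in> K" using uK b0 by (auto simp: yn_def L_def)
  qed
  have ne: "\<forall>l. \<tau> (yn l) \<noteq> []" using ynK subst_pow_K[OF gs] by (simp add: \<tau>_def)
  have yn0: "yn 0 = u ! c" using cL by (simp add: yn_def)
  have uKi: "\<And>l. l < L \<Longrightarrow> u ! l \<in> K" using uK by (auto simp: L_def)
  have Mle: "\<And>l. l < L \<Longrightarrow> length (\<tau> (u ! l)) \<le> M" using Mb uKi by (simp add: \<tau>_def)
  have wu: "window yn (- int c) (int L - int c - 1) = u"
    by (rule nth_equalityI) (auto simp: nth_window yn_def L_def)
  have wtake: "window yn (- int c) (- 1) = take c u"
    by (rule nth_equalityI) (use cL in \<open>auto simp: nth_window yn_def L_def\<close>)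
  define X where "X = seq_subst \<tau> yn"
  have WC: "window X (block_start \<tau> yn (- int c)) (block_start \<tau> yn (int L - int c) - 1) = C"
    using window_blocks[OF ne, of "- int c" "int L - int c"] cL wu by (simp add: X_def C_def)
  have W0: "window X (block_start \<tau> yn (- int c)) (block_start \<tau> yn 0 - 1) = concat (map \<tau> (take c u))"
    using window_blocks[OF ne, of "- int c" 0] wtake by (simp add: X_def)
  have "length (concat (map \<tau> (take c u))) = S c"
    using cL by (simp add: length_concat_map S_def L_def)
  then have "nat (- block_start \<tau> yn (- int c)) = S c"
    using arg_cong[OF W0, of length] by simp
  moreover have "block_start \<tau> yn (- int c) \<le> 0"
    using bs_mono_le[OF ne, of "- int c" 0] by simp
  ultimately have bsc: "block_start \<tau> yn (- int c) = - int (S c)" by linarith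
  have approx: "dist (z t) (X (t + int r)) < 2 / real (Suc n)" if t: "- int n \<le> t" "t \<le> int n" for t
  proof -
    define i where "i = nat (int n + t)"
    have i: "i < 2 * n + 1" "int i = int n + t" using t by (auto simp: i_def)
    have fC: "f = take (2 * n + 1) (drop p C)" using p(2) lf by simp
    have pC: "p + (2 * n + 1) \<le> length C" using p(1) lf by simp
    have Q: "p + i < length C" using pC i by simp
    have lenW: "nat (block_start \<tau> yn (int L - int c) - 1 - block_start \<tau> yn (- int c) + 1) = length C"
      using arg_cong[OF WC, of length] by simp
    have "X (block_start \<tau> yn (- int c) + int (p + i)) = C ! (p + i)"
      using nth_window[of "p + i" "block_start \<tau> yn (int L - int c) - 1" "block_start \<tau> yn (- int c)" X] Q lenW WC
      by simp
    moreover have "block_start \<tau> yn (- int c) + int (p + i) = t + int r"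
      using bsc i Sc by (simp add: r_def P_def)
    moreover have "C ! (p + i) = f ! i"
      using i(1) pC by (simp add: fC nth_drop)
    moreover have "w0 ! i = z t"
      using i by (simp add: w0_def nth_window)
    ultimately show ?thesis using fd i by (metis dist_commute)
  qed
  have fac: "subst_factor K \<sigma> (window yn (- int N) (int N))" if NM: "(N + 1) * M \<le> n" for N
  proof -
    have "S c \<le> of_nat (card {0..<c}) * M"
      unfolding S_def by (rule sum_bounded_above) (use Mle cL in auto)
    then have ScM: "S c \<le> c * M" by simp
    have "length (\<tau> (u ! c)) \<le> M" using Mle cL by simp
    then have "r < M" using rlt by simp
    then have "P < S c + M" using Sc by (simp add: r_def)
    moreover have e1: "(N + 1) * M = N * M + M" "(c + 1) * M = c * M + M" by simp_all
    ultimately have "(N + 1) * M < (c + 1) * M" using NM ScM unfolding P_def by linarith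
    then have cN: "N < c" by (meson add_less_cancel_right mult_less_cancel2)
    have "S (Suc c) + (\<Sum>l=Suc c..<L. length (\<tau> (u ! l))) = S L"
      unfolding S_def by (rule sum.atLeastLessThan_concat) (use cL in auto)
    moreover have "(\<Sum>l=Suc c..<L. length (\<tau> (u ! l))) \<le> of_nat (card {Suc c..<L}) * M"
      by (rule sum_bounded_above) (use Mle in auto)
    moreover have "S (Suc c) \<le> P + M" using S_Suc Sc Mle cL by (simp add: add_mono)
    moreover have "P + n + 1 \<le> S L" using p(1) lf TL by (simp add: P_def)
    ultimately have "n + 1 \<le> (L - Suc c) * M + M" by simp
    moreover have "(L - Suc c + 1) * M = (L - Suc c) * M + M" by simp
    ultimately have "(N + 1) * M < (L - Suc c + 1) * M" using NM e1(1) by linarith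
    then have "N + 1 < L - Suc c + 1" by (meson mult_less_cancel2)
    then have cN2: "c + N < L" by simp
    have "window yn (- int N) (int N) = take (2 * N + 1) (drop (c - N) u)"
    proof (rule nth_equalityI)
      show "length (window yn (- int N) (int N)) = length (take (2 * N + 1) (drop (c - N) u))"
        using cN cN2 by (simp add: L_def nat_add_distrib)
      fix i assume "i < length (window yn (- int N) (int N))"
      then have i: "i < 2 * N + 1" by (simp add: nat_add_distrib)
      have "window yn (- int N) (int N) ! i = yn (- int N + int i)"
        by (rule nth_window) (use i in simp)
      also have "\<dots> = u ! (c - N + i)"
      proof -
        have "nat (int c + (- int N + int i)) = c - N + i" using cN by simp
        then show ?thesis using i cN cN2 by (simp add: yn_def L_def)
      qed
      also have "\<dots> = take (2 * N + 1) (drop (c - N) u) ! i"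
        using i cN cN2 by (simp add: L_def nth_drop)
      finally show "window yn (- int N) (int N) ! i = take (2 * N + 1) (drop (c - N) u) ! i" .
    qed
    then have "sublist (window yn (- int N) (int N)) (subst_pow \<sigma> (j - k) b)"
      by (simp add: u_def sublist_take_drop2)
    then show ?thesis using bK by (auto simp: subst_factor_def)
  qed
  show ?thesis
    apply (rule exI[of _ yn], rule exI[of _ r])
    using ynK rlt yn0 approx fac by (auto simp: X_def \<tau>_def)
qed



lemma bs_cong:
  assumes "\<And>l. - \<bar>m\<bar> \<le> l \<Longrightarrow> l \<le> \<bar>m\<bar> \<Longrightarrow> length (\<tau> (y l)) = length (\<tau>' (y' l))"
  shows "block_start \<tau> y m = block_start \<tau>' y' m"
proof (cases "0 \<le> m")
  case True
  have "(\<Sum>l\<in>{0..<m}. int (length (\<tau> (y l)))) = (\<Sum>l\<in>{0..<m}. int (length (\<tau>' (y' l))))"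
    by (rule sum.cong) (use assms True in auto)
  then show ?thesis using True by (simp add: block_start_def)
next
  case False
  have "(\<Sum>l\<in>{m..<0}. int (length (\<tau> (y l)))) = (\<Sum>l\<in>{m..<0}. int (length (\<tau>' (y' l))))"
    by (rule sum.cong) (use assms False in auto)
  then show ?thesis using False by (simp add: block_start_def)
qed

lemma bound_exists:
  assumes gs: "gen_subst K \<sigma>" and cK: "compact K" and b0: "b0 \<in> K"
  shows "\<exists>M. \<forall>a\<in>K. length (subst_pow \<sigma> k a) \<le> M"
proof -
  have "continuous_on K (\<lambda>a. length (subst_pow \<sigma> k a))"
  proof (rule continuous_on_sequentiallyI)
    fix u a assume u: "\<forall>n. u n \<in> K" and a: "a \<in> K" and lim: "u \<longlonglongrightarrow> a"
    have "wconv (\<lambda>n. subst_pow \<sigma> k (u n)) (subst_pow \<sigma> k a)"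
      using subst_pow_wconv[where x=u, OF gs _ a lim] u by blast
    then have "eventually (\<lambda>n. length (subst_pow \<sigma> k (u n)) = length (subst_pow \<sigma> k a)) sequentially"
      by (simp add: wconv_def)
    then show "(\<lambda>n. length (subst_pow \<sigma> k (u n))) \<longlonglongrightarrow> length (subst_pow \<sigma> k a)"
      by (rule tendsto_eventually)
  qed
  then obtain x where "x \<in> K" "\<forall>a\<in>K. length (subst_pow \<sigma> k a) \<le> length (subst_pow \<sigma> k x)"
    using continuous_attains_sup[OF cK] b0 by blast
  then show ?thesis by blast
qed

lemma compact_seqs:
  fixes K :: "'a::metric_space set"
  assumes "compact K"
  shows "seq_compact {y :: int \<Rightarrow> 'a. \<forall>l. y l \<in> K}"
proof -
  have "{y :: int \<Rightarrow> 'a. \<forall>l. y l \<in> K} = PiE UNIV (\<lambda>_. K)" by (auto simp: PiE_def Pi_def)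
  moreover have "compactin (product_topology (\<lambda>_. euclidean) UNIV) (PiE (UNIV :: int set) (\<lambda>_. K))"
    using assms by (simp add: compactin_PiE)
  ultimately have "compact {y :: int \<Rightarrow> 'a. \<forall>l. y l \<in> K}"
    by (simp add: euclidean_product_topology)
  then show ?thesis by (rule compact_imp_seq_compact)
qed

lemma coord_tendsto:
  fixes Y :: "nat \<Rightarrow> int \<Rightarrow> 'a::metric_space"
  assumes "Y \<longlonglongrightarrow> y"
  shows "(\<lambda>n. Y n l) \<longlonglongrightarrow> y l"
proof -
  have "isCont (\<lambda>x :: int \<Rightarrow> 'a. x l) y"
    using continuous_on_product_coordinates[of l] continuous_on_eq_continuous_at[OF open_UNIV] by blast
  then show ?thesis using isCont_tendsto_compose[OF _ assms] by blast
qed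



theorem mainTheorem19:
  fixes K :: "'a::metric_space set" and \<sigma> :: "'a \<Rightarrow> 'a list" and z :: "int \<Rightarrow> 'a" and k :: nat
  assumes "alphabet_space K" and "gen_subst K \<sigma>" and "primitive K \<sigma>"
    and "z \<in> subshift K \<sigma>"
  shows "concat_of_words K \<sigma> k z \<and>
         (\<exists>i::nat. \<exists>y\<in>subshift K \<sigma>. z = (shift ^^ i) (seq_subst (subst_pow \<sigma> k) y))"
proof -
  note gs = assms(2) and prim = assms(3) and zs = assms(4)
  define \<tau> where "\<tau> = subst_pow \<sigma> k"
  have cK: "compact K" using assms(1) by (simp add: alphabet_space_def)
  obtain b0 where b0: "b0 \<in> K" using assms(1) by (auto simp: alphabet_space_def)
  obtain M where M: "\<forall>a\<in>K. length (subst_pow \<sigma> k a) \<le> M" using bound_exists[OF gs cK b0] by blast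
  define PP where "PP n yn r \<longleftrightarrow> (\<forall>l. yn l \<in> K) \<and> r < length (subst_pow \<sigma> k (yn 0)) \<and>
    (\<forall>t. - int n \<le> t \<and> t \<le> int n \<longrightarrow>
        dist (z t) (seq_subst (subst_pow \<sigma> k) yn (t + int r)) < 2 / real (Suc n)) \<and>
    (\<forall>N. (N + 1) * M \<le> n \<longrightarrow> subst_factor K \<sigma> (window yn (- int N) (int N)))" for n yn r
  have "\<forall>n. \<exists>yn. \<exists>r. PP n yn r"
    unfolding PP_def using desubst_n[OF gs prim b0 zs M] by blast
  then obtain Y where "\<forall>n. \<exists>r. PP n (Y n) r" by (rule choice[THEN exE])
  then obtain r where PPn: "\<forall>n. PP n (Y n) (r n)" by (rule choice[THEN exE])
  have YK: "\<And>n l. Y n l \<in> K" and rlt: "\<And>n. r n < length (\<tau> (Y n 0))"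
    and Yap: "\<And>n t. - int n \<le> t \<Longrightarrow> t \<le> int n \<Longrightarrow>
        dist (z t) (seq_subst \<tau> (Y n) (t + int (r n))) < 2 / real (Suc n)"
    and Yfac: "\<And>n N. (N + 1) * M \<le> n \<Longrightarrow> subst_factor K \<sigma> (window (Y n) (- int N) (int N))"
    using PPn unfolding PP_def \<tau>_def by blast+
  have rM: "r n < M" for n
  proof -
    have "length (\<tau> (Y n 0)) \<le> M" using M YK[of n 0] by (simp add: \<tau>_def)
    then show ?thesis using rlt[of n] by linarith
  qed
  have "\<exists>i<M. infinite {n. r n = i}"
  proof (rule ccontr)
    assume "\<not> (\<exists>i<M. infinite {n. r n = i})"
    then have "finite (\<Union>i\<in>{..<M}. {n. r n = i})" by auto
    moreover have "(\<Union>i\<in>{..<M}. {n. r n = i}) = UNIV" using rM by auto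
    ultimately show False by simp
  qed
  then obtain i where iM: "i < M" and inf: "infinite {n. r n = i}" by blast
  obtain s1 :: "nat \<Rightarrow> nat" where s1: "strict_mono s1" "\<forall>n. s1 n \<in> {n. r n = i}"
    using infinite_enumerate[OF inf] by blast
  have inS: "\<forall>n. Y (s1 n) \<in> {y :: int \<Rightarrow> 'a. \<forall>l. y l \<in> K}" using YK by simp
  obtain y s2 where yK: "y \<in> {y :: int \<Rightarrow> 'a. \<forall>l. y l \<in> K}" and s2: "strict_mono s2"
    and lim: "((\<lambda>n. Y (s1 n)) \<circ> s2) \<longlonglongrightarrow> y"
    by (rule seq_compactE[OF compact_seqs[OF cK] inS])
  define s where "s = s1 \<circ> s2"
  have smono: "strict_mono s" using s1(1) s2 by (simp add: s_def strict_mono_o)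
  have sge: "n \<le> s n" for n using seq_suble[OF smono] .
  have rs: "r (s n) = i" for n using s1(2) by (simp add: s_def)
  have yK': "\<And>l. y l \<in> K" using yK by simp
  have conv: "(\<lambda>n. Y (s n) l) \<longlonglongrightarrow> y l" for l
    using coord_tendsto[OF lim, of l] by (simp add: s_def o_def)
  have ney: "\<forall>l. \<tau> (y l) \<noteq> []" using subst_pow_K[OF gs] yK' by (simp add: \<tau>_def)
  have neY: "\<forall>l. \<tau> (Y n l) \<noteq> []" for n using subst_pow_K[OF gs] YK by (simp add: \<tau>_def)
  have wc: "wconv (\<lambda>n. \<tau> (Y (s n) l)) (\<tau> (y l))" for l
    unfolding \<tau>_def by (rule subst_pow_wconv[OF gs _ yK' conv]) (rule YK)
  define X where "X = seq_subst \<tau> y"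
  have zX: "z t = X (t + int i)" for t
  proof -
    define Q where "Q = t + int i"
    obtain m where m: "block_start \<tau> y m \<le> Q" "Q < block_start \<tau> y (m + 1)"
      using bs_cover[OF ney] by blast
    define R where "R = nat (Q - block_start \<tau> y m)"
    have RQ: "block_start \<tau> y m + int R = Q" using m by (simp add: R_def)
    have Rlt: "R < length (\<tau> (y m))" using m by (simp add: R_def bs_succ)
    have XQ: "X Q = \<tau> (y m) ! R" using seq_subst_bs[OF ney Rlt] RQ by (simp add: X_def)
    define A where "A = {- \<bar>m\<bar> - 1 .. \<bar>m\<bar> + 1}"
    have "eventually (\<lambda>n. \<forall>l\<in>A. length (\<tau> (Y (s n) l)) = length (\<tau> (y l))) sequentially"
      by (rule eventually_ball_finite) (use wc in \<open>auto simp: A_def wconv_def\<close>)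
    then have ev: "eventually (\<lambda>n. seq_subst \<tau> (Y (s n)) Q = \<tau> (Y (s n) m) ! R) sequentially"
    proof eventually_elim
      case (elim n)
      have "block_start \<tau> (Y (s n)) m = block_start \<tau> y m"
        by (rule bs_cong) (use elim in \<open>auto simp: A_def\<close>)
      moreover have "m \<in> A" unfolding A_def by (simp add: abs_if)
      then have "length (\<tau> (Y (s n) m)) = length (\<tau> (y m))"
        using elim by blast
      ultimately show ?case using seq_subst_bs[OF neY, of R "s n" m] Rlt RQ by simp
    qed
    have "(\<lambda>n. \<tau> (Y (s n) m) ! R) \<longlonglongrightarrow> \<tau> (y m) ! R" using wc[of m] Rlt by (simp add: wconv_def)
    moreover have "eventually (\<lambda>n. \<tau> (Y (s n) m) ! R = seq_subst \<tau> (Y (s n)) Q) sequentially"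
      using ev by eventually_elim simp
    ultimately have "(\<lambda>n. seq_subst \<tau> (Y (s n)) Q) \<longlonglongrightarrow> \<tau> (y m) ! R"
      by (rule Lim_transform_eventually)
    then have limX: "(\<lambda>n. seq_subst \<tau> (Y (s n)) Q) \<longlonglongrightarrow> X Q" using XQ by simp
    have limZ: "(\<lambda>n. seq_subst \<tau> (Y (s n)) Q) \<longlonglongrightarrow> z t"
      unfolding lim_sequentially
    proof (intro allI impI)
      fix e :: real assume e: "e > 0"
      then obtain N0 where N0: "inverse (real (Suc N0)) < e / 2" using reals_Archimedean[of "e/2"] by auto
      have "dist (seq_subst \<tau> (Y (s n)) Q) (z t) < e" if n: "n \<ge> max N0 (nat \<bar>t\<bar>)" for n
      proof -
        have sn: "s n \<ge> N0" "s n \<ge> nat \<bar>t\<bar>" using n sge[of n] by auto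
        have "dist (z t) (seq_subst \<tau> (Y (s n)) (t + int (r (s n)))) < 2 / real (Suc (s n))"
          by (rule Yap) (use sn in auto)
        also have "\<dots> \<le> 2 / real (Suc N0)" using sn by (simp add: divide_simps)
        also have "\<dots> < e" using N0 by (simp add: field_simps)
        finally show ?thesis by (simp add: rs Q_def dist_commute)
      qed
      then show "\<exists>no. \<forall>n\<ge>no. dist (seq_subst \<tau> (Y (s n)) Q) (z t) < e" by blast
    qed
    show ?thesis using LIMSEQ_unique[OF limZ limX] by (simp add: Q_def)
  qed
  have zeq: "z = (shift ^^ i) (seq_subst (subst_pow \<sigma> k) y)"
    by (rule ext) (simp add: shift_pow zX X_def \<tau>_def)
  have ysub: "y \<in> subshift K \<sigma>"
    unfolding subshift_def
  proof (intro CollectI allI)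
    fix N :: nat
    define c where "c = (N + 1) * M"
    define ws where "ws m = window (Y (s (m + c))) (- int N) (int N)" for m
    have fac: "subst_factor K \<sigma> (ws m)" for m
      unfolding ws_def by (rule Yfac) (use sge[of "m + c"] in \<open>simp add: c_def\<close>)
    have limj: "\<forall>j<length (window y (- int N) (int N)). (\<lambda>m. ws m ! j) \<longlonglongrightarrow> window y (- int N) (int N) ! j"
    proof (intro allI impI)
      fix j assume that: "j < length (window y (- int N) (int N))"
      have "(\<lambda>m. Y (s (m + c)) (- int N + int j)) \<longlonglongrightarrow> y (- int N + int j)"
        using LIMSEQ_ignore_initial_segment[OF conv] .
      then show "(\<lambda>m. ws m ! j) \<longlonglongrightarrow> window y (- int N) (int N) ! j"
        using that by (simp add: ws_def nth_window)
    qed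
    have setK: "set (window y (- int N) (int N)) \<subseteq> K" using yK' by (auto simp: window_def)
    have wsf: "\<forall>m. subst_factor K \<sigma> (ws m) \<and> length (ws m) = length (window y (- int N) (int N))"
      using fac by (simp add: ws_def)
    show "window y (- int N) (int N) \<in> lang K \<sigma>"
      unfolding lang_def
    proof (intro CollectI conjI disjI2 exI[of _ ws])
      show "set (window y (- int N) (int N)) \<subseteq> K" by (rule setK)
      show "\<forall>m. subst_factor K \<sigma> (ws m) \<and> length (ws m) = length (window y (- int N) (int N))" by (rule wsf)
      show "\<forall>j<length (window y (- int N) (int N)). (\<lambda>m. ws m ! j) \<longlonglongrightarrow> window y (- int N) (int N) ! j"
        by (rule limj)
    qed
  qed
  have cw: "concat_of_words K \<sigma> k z"
    unfolding concat_of_words_def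
  proof (intro exI conjI allI)
    show "strict_mono (\<lambda>l. block_start \<tau> y l - int i)"
      using bs_strict_mono[OF ney] by (simp add: strict_mono_def)
    fix l
    have "window z (block_start \<tau> y l - int i) (block_start \<tau> y (l + 1) - int i - 1)
        = window X (block_start \<tau> y l) (block_start \<tau> y (l + 1) - 1)"
    proof -
      have "z = (\<lambda>t. X (t + int i))" using zX by auto
      then show ?thesis by (simp add: window_shift)
    qed
    also have "\<dots> = \<tau> (y l)" unfolding X_def by (rule window_block[OF ney])
    finally show "\<exists>a\<in>K. window z (block_start \<tau> y l - int i) (block_start \<tau> y (l + 1) - int i - 1) = subst_pow \<sigma> k a"
      using yK' by (auto simp: \<tau>_def)
  qed
  show ?thesis using cw zeq ysub by blast
qed


end
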